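(* Let $p_1,\dots,p_r$ be pairwise distinct prime numbers, $\alpha_1,\dots,\alpha_r$ positive integers, and $k_i=p_i^{\alpha_i}$. Then the ring $A=\mathbb{Z}_{k_1}\times\mathbb{Z}_{k_2}\times\cdots\times\mathbb{Z}_{k_r}$ (direct product with componentwise operations) is a BL-ring.
   Context: For a commutative unitary ring $R$, its ideals $Id(R)$ form a residuated lattice $(Id(R),\cap,+,\otimes,\rightarrow,\{0\},R)$, ordered by inclusion, where $I+J$ is the ideal sum, $I\otimes J$ the ideal product, and $I\rightarrow J=(J:I)=\{x\in R: xI\subseteq J\}$. A BL-algebra is a residuated lattice satisfying prelinearity $(x\rightarrow y)\vee(y\rightarrow x)=1$ and divisibility $x\odot(x\rightarrow y)=x\wedge y$. A BL-ring is a commutative unitary ring whose lattice of ideals, with this structure, is a BL-algebra. *)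

theory Defs
  imports "HOL-Algebra.Chinese_Remainder" "HOL-Algebra.Ideal_Product" "HOL-Number_Theory.Residues"
begin

text \<open>A residuated lattice (L, mt, jn, ml, rs, bt, tp): a bounded lattice
  (order given by x \<le> y iff mt x y = x, bt least, tp greatest), a commutative monoid
  (L, ml, tp), and the residuation law  ml x y \<le> z  iff  x \<le> rs y z.\<close>

definition residuated_lattice ::
  "'a set \<Rightarrow> ('a \<Rightarrow> 'a \<Rightarrow> 'a) \<Rightarrow> ('a \<Rightarrow> 'a \<Rightarrow> 'a) \<Rightarrow> ('a \<Rightarrow> 'a \<Rightarrow> 'a)
     \<Rightarrow> ('a \<Rightarrow> 'a \<Rightarrow> 'a) \<Rightarrow> 'a \<Rightarrow> 'a \<Rightarrow> bool" where
  "residuated_lattice L mt jn ml rs bt tp \<longleftrightarrow>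
     bt \<in> L \<and> tp \<in> L \<and>
     (\<forall>x\<in>L. \<forall>y\<in>L. mt x y \<in> L \<and> jn x y \<in> L \<and> ml x y \<in> L \<and> rs x y \<in> L) \<and>
     (\<forall>x\<in>L. \<forall>y\<in>L. mt x y = mt y x \<and> jn x y = jn y x) \<and>
     (\<forall>x\<in>L. \<forall>y\<in>L. \<forall>z\<in>L. mt (mt x y) z = mt x (mt y z) \<and>
                              jn (jn x y) z = jn x (jn y z)) \<and>
     (\<forall>x\<in>L. \<forall>y\<in>L. mt x (jn x y) = x \<and> jn x (mt x y) = x) \<and>
     (\<forall>x\<in>L. mt bt x = bt \<and> mt x tp = x) \<and>
     (\<forall>x\<in>L. \<forall>y\<in>L. \<forall>z\<in>L. ml (ml x y) z = ml x (ml y z)) \<and>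
     (\<forall>x\<in>L. \<forall>y\<in>L. ml x y = ml y x) \<and>
     (\<forall>x\<in>L. ml x tp = x) \<and>
     (\<forall>x\<in>L. \<forall>y\<in>L. \<forall>z\<in>L. (mt (ml x y) z = ml x y) \<longleftrightarrow> (mt x (rs y z) = x))"

definition BL_algebra ::
  "'a set \<Rightarrow> ('a \<Rightarrow> 'a \<Rightarrow> 'a) \<Rightarrow> ('a \<Rightarrow> 'a \<Rightarrow> 'a) \<Rightarrow> ('a \<Rightarrow> 'a \<Rightarrow> 'a)
     \<Rightarrow> ('a \<Rightarrow> 'a \<Rightarrow> 'a) \<Rightarrow> 'a \<Rightarrow> 'a \<Rightarrow> bool" where
  "BL_algebra L mt jn ml rs bt tp \<longleftrightarrow>
     residuated_lattice L mt jn ml rs bt tp \<and>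
     (\<forall>x\<in>L. \<forall>y\<in>L. jn (rs x y) (rs y x) = tp) \<and>
     (\<forall>x\<in>L. \<forall>y\<in>L. ml x (rs x y) = mt x y)"

definition ideal_res :: "('a, 'b) ring_scheme \<Rightarrow> 'a set \<Rightarrow> 'a set \<Rightarrow> 'a set" where
  "ideal_res R I J = {x \<in> carrier R. \<forall>y\<in>I. x \<otimes>\<^bsub>R\<^esub> y \<in> J}"

definition BL_ring :: "('a, 'b) ring_scheme \<Rightarrow> bool" where
  "BL_ring R \<longleftrightarrow> cring R \<and>
     BL_algebra {I. ideal I R} (\<inter>) (set_add R) (ideal_prod R) (\<lambda>I J. ideal_res R I J)
       {\<zero>\<^bsub>R\<^esub>} (carrier R)"

end

theory Submission
  imports Defs "HOL-Algebra.IntRing" "HOL-Number_Theory.Residues"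
begin


definition BLD :: "('a, 'b) ring_scheme \<Rightarrow> bool" where
  "BLD R \<longleftrightarrow> (\<forall>I J. ideal I R \<longrightarrow> ideal J R \<longrightarrow> I \<inter> J \<subseteq> ideal_prod R I (ideal_res R I J))"

definition BLP :: "('a, 'b) ring_scheme \<Rightarrow> bool" where
  "BLP R \<longleftrightarrow> (\<forall>I J. ideal I R \<longrightarrow> ideal J R \<longrightarrow>
      \<one>\<^bsub>R\<^esub> \<in> set_add R (ideal_res R I J) (ideal_res R J I))"

lemma (in cring) ideal_res_ideal:
  assumes "ideal I R" "ideal J R"
  shows "ideal (ideal_res R I J) R"
proof (rule idealI)
  show "ring R" by (rule ring_axioms)
  show "subgroup (ideal_res R I J) (add_monoid R)"
  proof
    show "ideal_res R I J \<subseteq> carrier (add_monoid R)" unfolding ideal_res_def by auto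
    show "\<one>\<^bsub>add_monoid R\<^esub> \<in> ideal_res R I J"
      using assms unfolding ideal_res_def
      by (auto simp: ideal.Icarr additive_subgroup.zero_closed ideal.axioms(1))
    fix x y assume x: "x \<in> ideal_res R I J" and y: "y \<in> ideal_res R I J"
    show "x \<otimes>\<^bsub>add_monoid R\<^esub> y \<in> ideal_res R I J"
      using x y assms unfolding ideal_res_def
      by (auto simp: l_distr ideal.Icarr additive_subgroup.a_closed ideal.axioms(1))
  next
    fix x assume x: "x \<in> ideal_res R I J"
    have "\<And>z. z \<in> I \<Longrightarrow> (\<ominus> x) \<otimes> z = \<ominus> (x \<otimes> z)"
      using x assms(1) unfolding ideal_res_def by (auto simp: l_minus ideal.Icarr)
    then show "inv\<^bsub>add_monoid R\<^esub> x \<in> ideal_res R I J"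
      using x assms unfolding ideal_res_def a_inv_def[symmetric]
      by (auto simp: additive_subgroup.a_inv_closed ideal.axioms(1))
  qed
  fix a x assume a: "a \<in> ideal_res R I J" and x: "x \<in> carrier R"
  show "x \<otimes> a \<in> ideal_res R I J"
    using a x assms unfolding ideal_res_def
    by (auto simp: m_assoc ideal.Icarr ideal.I_l_closed)
  then show "a \<otimes> x \<in> ideal_res R I J"
    using a x unfolding ideal_res_def by (simp add: m_comm)
qed

lemma (in cring) residuation:
  assumes "ideal I R" "ideal J R" "ideal K R"
  shows "ideal_prod R I J \<subseteq> K \<longleftrightarrow> I \<subseteq> ideal_res R J K"
proof
  assume h: "ideal_prod R I J \<subseteq> K"
  show "I \<subseteq> ideal_res R J K"
    unfolding ideal_res_def using h assms(1) ideal_prod.prod[of _ I _ J R]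
    by (auto simp: ideal.Icarr)
next
  assume h: "I \<subseteq> ideal_res R J K"
  show "ideal_prod R I J \<subseteq> K"
  proof
    fix s assume "s \<in> ideal_prod R I J" then show "s \<in> K"
    proof (induct s rule: ideal_prod.induct)
      case (prod i j) then show ?case using h unfolding ideal_res_def by auto
    next
      case (sum s1 s2) then show ?case
        using assms(3) by (simp add: additive_subgroup.a_closed ideal.axioms(1))
    qed
  qed
qed

lemma (in cring) BL_ringI:
  assumes D: "BLD R" and P: "BLP R"
  shows "BL_ring R"
proof -
  interpret S: semiring "ideals_set R" by (rule ideals_set_is_semiring)
  have carr: "carrier (ideals_set R) = {I. ideal I R}" 
    and ad: "ring.add (ideals_set R) = set_add R"
    and mu: "monoid.mult (ideals_set R) = ideal_prod R"
    and on: "one (ideals_set R) = carrier R"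
    unfolding ideals_set_def by auto
  have addc: "\<And>I J. ideal I R \<Longrightarrow> ideal J R \<Longrightarrow> set_add R I J = set_add R J I"
    using S.a_comm unfolding carr ad by auto
  have adda: "\<And>I J K. ideal I R \<Longrightarrow> ideal J R \<Longrightarrow> ideal K R \<Longrightarrow> set_add R (set_add R I J) K = set_add R I (set_add R J K)"
    using S.a_assoc unfolding carr ad by auto
  have mulc: "\<And>I J. ideal I R \<Longrightarrow> ideal J R \<Longrightarrow> ideal_prod R I J = ideal_prod R J I"
    using ideal_prod_commute by auto
  have mula: "\<And>I J K. ideal I R \<Longrightarrow> ideal J R \<Longrightarrow> ideal K R \<Longrightarrow> ideal_prod R (ideal_prod R I J) K = ideal_prod R I (ideal_prod R J K)"
    using ideal_prod_assoc by auto
  have sup1: "\<And>I J. ideal I R \<Longrightarrow> ideal J R \<Longrightarrow> I \<subseteq> set_add R I J"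
    by (metis genideal_self le_sup_iff union_genideal ideal.axioms(1) additive_subgroup.a_subset Un_subset_iff)
  have sup2: "\<And>I J. ideal I R \<Longrightarrow> ideal J R \<Longrightarrow> set_add R I (I \<inter> J) = I"
  proof -
    fix I J assume "ideal I R" "ideal J R"
    then have "ideal (I \<inter> J) R" by (rule i_intersect)
    then show "set_add R I (I \<inter> J) = I"
      by (metis \<open>ideal I R\<close> Un_Int_eq(3) \<open>ideal (I \<inter> J) R\<close> union_genideal Un_absorb2 inf_le1
          genideal_minimal genideal_self ideal.axioms(1) additive_subgroup.a_subset subset_antisym order_refl)
  qed
  have res: "residuated_lattice {I. ideal I R} (\<inter>) (set_add R) (ideal_prod R) (\<lambda>I J. ideal_res R I J)
       {\<zero>} (carrier R)"
    unfolding residuated_lattice_def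
    apply (intro conjI ballI)
    apply (simp_all add: zeroideal oneideal i_intersect add_ideals ideal_prod_is_ideal ideal_res_ideal)
    subgoal by blast
    subgoal using addc by blast
    subgoal by blast
    subgoal using adda by blast
    subgoal using sup1 by blast
    subgoal using sup2 by blast
    subgoal by (auto simp: additive_subgroup.zero_closed ideal.axioms(1))
    subgoal by (auto simp: ideal.Icarr)
    subgoal using mula by blast
    subgoal using mulc by blast
    subgoal using ideal_prod_one by blast
    subgoal for I J K using residuation[of I J K] by blast
    done
  have pre: "set_add R (ideal_res R I J) (ideal_res R J I) = carrier R"
    if "ideal I R" "ideal J R" for I J
  proof -
    have "ideal (set_add R (ideal_res R I J) (ideal_res R J I)) R"
      using that by (simp add: add_ideals ideal_res_ideal)
    then show ?thesis using P that unfolding BLP_def by (metis ideal.one_imp_carrier)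
  qed
  have div: "ideal_prod R I (ideal_res R I J) = I \<inter> J"
    if "ideal I R" "ideal J R" for I J
  proof
    show "I \<inter> J \<subseteq> ideal_prod R I (ideal_res R I J)" using D that unfolding BLD_def by blast
    have "ideal_prod R I (ideal_res R I J) \<subseteq> I"
      using ideal_prod_inter[OF that(1) ideal_res_ideal[OF that]] by blast
    moreover have "ideal_prod R (ideal_res R I J) I \<subseteq> J"
      using residuation[OF ideal_res_ideal[OF that] that(1) that(2)] by blast
    ultimately show "ideal_prod R I (ideal_res R I J) \<subseteq> I \<inter> J"
      using ideal_prod_commute[OF that(1) ideal_res_ideal[OF that]] by blast
  qed
  show ?thesis
    unfolding BL_ring_def BL_algebra_def
    using res pre div is_cring by auto
qed



lemma hom_res:
  assumes hom: "h \<in> ring_hom R S" and surj: "h ` carrier R = carrier S"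
    and K: "K \<subseteq> carrier S"
  assumes j: "j \<in> ideal_res R {x \<in> carrier R. h x \<in> K} {x \<in> carrier R. h x \<in> L}"
  shows "h j \<in> ideal_res S K L"
proof -
  have jc: "j \<in> carrier R" using j unfolding ideal_res_def by auto
  have "h j \<otimes>\<^bsub>S\<^esub> y \<in> L" if y: "y \<in> K" for y
  proof -
    obtain y' where y': "y' \<in> carrier R" "y = h y'" using y K surj by (metis imageE subsetD)
    then have "j \<otimes>\<^bsub>R\<^esub> y' \<in> {x \<in> carrier R. h x \<in> L}" using j y unfolding ideal_res_def by auto
    then show ?thesis using y' jc hom by (simp add: ring_hom_mult)
  qed
  then show ?thesis unfolding ideal_res_def using jc hom by (simp add: ring_hom_closed)
qed

lemma BLD_D: "BLD R \<Longrightarrow> ideal I R \<Longrightarrow> ideal J R \<Longrightarrow> x \<in> I \<Longrightarrow> x \<in> J \<Longrightarrow> x \<in> ideal_prod R I (ideal_res R I J)"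
  unfolding BLD_def by blast

lemma BLP_D: "BLP R \<Longrightarrow> ideal I R \<Longrightarrow> ideal J R \<Longrightarrow> \<one>\<^bsub>R\<^esub> \<in> set_add R (ideal_res R I J) (ideal_res R J I)"
  unfolding BLP_def by blast

lemma hom_BL:
  assumes R: "cring R" and S: "ring S" and hom: "h \<in> ring_hom R S"
    and surj: "h ` carrier R = carrier S" and D: "BLD R" and P: "BLP R"
  shows "cring S" "BLD S" "BLP S"
proof -
  interpret R: cring R by fact
  interpret S: ring S by fact
  interpret H: ring_hom_ring R S h using ring_hom_ringI2[OF R.ring_axioms S hom] .
  show "cring S"
  proof -
    have "x \<otimes>\<^bsub>S\<^esub> y = y \<otimes>\<^bsub>S\<^esub> x" if "x \<in> carrier S" "y \<in> carrier S" for x y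
    proof -
      have "x \<in> h ` carrier R" "y \<in> h ` carrier R" using that surj by auto
      then obtain a b where "a \<in> carrier R" "b \<in> carrier R" "x = h a" "y = h b"
        by blast
      then have "x \<otimes>\<^bsub>S\<^esub> y = h (a \<otimes>\<^bsub>R\<^esub> b)" "y \<otimes>\<^bsub>S\<^esub> x = h (b \<otimes>\<^bsub>R\<^esub> a)"
        by (simp_all add: H.hom_mult)
      then show ?thesis using \<open>a \<in> carrier R\<close> \<open>b \<in> carrier R\<close> by (simp add: R.m_comm)
    qed
    then show ?thesis
      unfolding cring_def comm_monoid_def comm_monoid_axioms_def
      using S.ring_axioms S.monoid_axioms by auto
  qed
  have pre: "ideal {x \<in> carrier R. h x \<in> K} R" "h ` {x \<in> carrier R. h x \<in> K} = K" if "ideal K S" for K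
  proof -
    show "ideal {x \<in> carrier R. h x \<in> K} R" by (rule H.ideal_vimage[OF that])
    have "k \<in> h ` {x \<in> carrier R. h x \<in> K}" if "k \<in> K" for k
    proof -
      have "k \<in> h ` carrier R" using surj ideal.Icarr[OF \<open>ideal K S\<close> that] by simp
      then obtain x where "x \<in> carrier R" "k = h x" by blast
      then show ?thesis using that by blast
    qed
    then show "h ` {x \<in> carrier R. h x \<in> K} = K" by blast
  qed
  show "BLD S" unfolding BLD_def
  proof (intro allI impI subsetI)
    fix K L z assume K: "ideal K S" and L: "ideal L S" and z: "z \<in> K \<inter> L"
    have Kc: "K \<subseteq> carrier S" using ideal.Icarr[OF K] by blast
    define K' where "K' = {x \<in> carrier R. h x \<in> K}"
    define L' where "L' = {x \<in> carrier R. h x \<in> L}"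
    obtain x where x: "x \<in> carrier R" "z = h x" proof -
      have "z \<in> h ` carrier R" using z ideal.Icarr[OF K] surj by auto
      then show ?thesis using that by blast
    qed
    have "x \<in> K' \<inter> L'" using x z unfolding K'_def L'_def by auto
    then have xin: "x \<in> ideal_prod R K' (ideal_res R K' L')"
      using BLD_D[OF D pre(1)[OF K] pre(1)[OF L]] unfolding K'_def L'_def by blast
    have "s \<in> carrier R \<and> h s \<in> ideal_prod S K (ideal_res S K L)" if "s \<in> ideal_prod R K' (ideal_res R K' L')" for s
      using that
    proof (induct s rule: ideal_prod.induct)
      case (prod i j)
      have ic: "i \<in> carrier R" and jc: "j \<in> carrier R" using prod unfolding K'_def ideal_res_def by auto
      have "h i \<in> K" using prod unfolding K'_def by auto
      moreover have "h j \<in> ideal_res S K L"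
        using hom_res[OF hom surj Kc prod(2)[unfolded K'_def L'_def]] .
      ultimately show ?case using ic jc by (simp add: ideal_prod.prod)
    next
      case (sum s1 s2) then show ?case by (simp add: ideal_prod.sum)
    qed
    then show "z \<in> ideal_prod S K (ideal_res S K L)" using xin x by auto
  qed
  show "BLP S" unfolding BLP_def
  proof (intro allI impI)
    fix K L assume K: "ideal K S" and L: "ideal L S"
    have Kc: "K \<subseteq> carrier S" using ideal.Icarr[OF K] by blast
    have Lc: "L \<subseteq> carrier S" using ideal.Icarr[OF L] by blast
    define K' where "K' = {x \<in> carrier R. h x \<in> K}"
    define L' where "L' = {x \<in> carrier R. h x \<in> L}"
    have "\<one>\<^bsub>R\<^esub> \<in> set_add R (ideal_res R K' L') (ideal_res R L' K')"
      using BLP_D[OF P pre(1)[OF K] pre(1)[OF L]] unfolding K'_def L'_def .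
    then obtain u v where u: "u \<in> ideal_res R K' L'" and v: "v \<in> ideal_res R L' K'"
      and uv: "\<one>\<^bsub>R\<^esub> = u \<oplus>\<^bsub>R\<^esub> v"
      unfolding set_add_def' by auto
    have hu: "h u \<in> ideal_res S K L"
      using hom_res[OF hom surj Kc u[unfolded K'_def L'_def]] .
    have hv: "h v \<in> ideal_res S L K"
      using hom_res[OF hom surj Lc v[unfolded K'_def L'_def]] .
    have "\<one>\<^bsub>S\<^esub> = h u \<oplus>\<^bsub>S\<^esub> h v"
    proof -
      have "u \<in> carrier R" "v \<in> carrier R" using u v unfolding ideal_res_def by auto
      then show ?thesis using uv H.hom_one H.hom_add by metis
    qed
    then show "\<one>\<^bsub>S\<^esub> \<in> set_add S (ideal_res S K L) (ideal_res S L K)"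
      using hu hv unfolding set_add_def' by auto
  qed
qed



lemma int_ideal_principal:
  assumes I: "ideal I \<Z>"
  shows "\<exists>d. I = {x. d dvd x}"
proof -
  have add: "a + b \<in> I" if "a \<in> I" "b \<in> I" for a b
    using additive_subgroup.a_closed[OF ideal.axioms(1)[OF I] that] by simp
  have mul: "c * a \<in> I" if "a \<in> I" for a c
    using ideal.I_l_closed[OF I that, of c] by simp
  have zero: "0 \<in> I" using additive_subgroup.zero_closed[OF ideal.axioms(1)[OF I]] by simp
  show ?thesis
  proof (cases "I \<subseteq> {0}")
    case True
    then have "I = {0}" using zero by auto
    then show ?thesis by (intro exI[of _ 0]) auto
  next
    case False
    then obtain x where x: "x \<in> I" "x \<noteq> 0" by auto
    have "\<bar>x\<bar> \<in> I" using x mul[of x "sgn x"] by (simp add: abs_sgn mult.commute)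
    then have ex: "\<exists>n::nat. n > 0 \<and> int n \<in> I" using x
      by (intro exI[of _ "nat \<bar>x\<bar>"]) auto
    define n where "n = (LEAST n::nat. n > 0 \<and> int n \<in> I)"
    have n: "n > 0" "int n \<in> I" using LeastI_ex[OF ex] unfolding n_def by auto
    have nmin: "\<not> (m > 0 \<and> int m \<in> I)" if "m < n" for m
      using not_less_Least[of m "\<lambda>n. n > 0 \<and> int n \<in> I"] that unfolding n_def by blast
    have "I = {x. int n dvd x}"
    proof
      show "{x. int n dvd x} \<subseteq> I" using mul[OF n(2)] by (auto simp: dvd_def mult.commute)
      show "I \<subseteq> {x. int n dvd x}"
      proof
        fix y assume y: "y \<in> I"
        have eqm: "y mod int n = y + (- (y div int n)) * int n" by (simp add: minus_div_mult_eq_mod[symmetric])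
        moreover have "y + (- (y div int n)) * int n \<in> I" using add[OF y mul[OF n(2)]] by blast
        ultimately have ym: "y mod int n \<in> I" unfolding eqm by blast
        have "0 \<le> y mod int n" "y mod int n < int n" using n(1) by auto
        then have "y mod int n = 0"
        proof (cases "y mod int n = 0")
          case False
          let ?m = "nat (y mod int n)"
          have "?m < n" "?m > 0" "int ?m \<in> I" using False ym \<open>0 \<le> y mod int n\<close> \<open>y mod int n < int n\<close> by auto
          then show ?thesis using nmin[of ?m] by blast
        qed
        then show "y \<in> {x. int n dvd x}" by auto
      qed
    qed
    then show ?thesis by blast
  qed
qed

lemma int_res_mem:
  assumes "\<And>t. c * (d * t) \<in> J"
  shows "c \<in> ideal_res \<Z> {x. d dvd x} J"
  using assms unfolding ideal_res_def by (auto simp: dvd_def)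

lemma int_BLP: "BLP \<Z>"
  unfolding BLP_def
proof (intro allI impI)
  fix I J assume I: "ideal I \<Z>" and J: "ideal J \<Z>"
  obtain d where d: "I = {x. d dvd x}" using int_ideal_principal[OF I] by blast
  obtain e where e: "J = {x. e dvd x}" using int_ideal_principal[OF J] by blast
  define g where "g = gcd d e"
  obtain u v where uv: "\<one>\<^bsub>\<Z>\<^esub> = u \<oplus>\<^bsub>\<Z>\<^esub> v" "u \<in> ideal_res \<Z> I J" "v \<in> ideal_res \<Z> J I"
  proof (cases "g = 0")
    case True
    then have "d = 0" "e = 0" unfolding g_def by auto
    then show ?thesis using that[of 1 0] unfolding d e ideal_res_def by auto
  next
    case False
    have gd: "g dvd d" and ge: "g dvd e" unfolding g_def by auto
    have cop: "coprime (d div g) (e div g)" using False unfolding g_def by (simp add: div_gcd_coprime)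
    obtain a b where ab: "a * (d div g) + b * (e div g) = 1"
      using cop by (metis coprime_iff_gcd_eq_1 bezout_int)
    have deq: "d = g * (d div g)" and eeq: "e = g * (e div g)" using gd ge by auto
    have u: "b * (e div g) \<in> ideal_res \<Z> I J" unfolding d e
    proof (rule int_res_mem)
      fix t
      have "b * (e div g) * (d * t) = (b * (d div g) * t) * (g * (e div g))"
        by (subst deq) (simp add: algebra_simps)
      then show "b * (e div g) * (d * t) \<in> {x. e dvd x}" using eeq by (metis dvd_triv_right mem_Collect_eq)
    qed
    have v: "a * (d div g) \<in> ideal_res \<Z> J I" unfolding d e
    proof (rule int_res_mem)
      fix t
      have "a * (d div g) * (e * t) = (a * (e div g) * t) * (g * (d div g))"
        by (subst eeq) (simp add: algebra_simps)
      then show "a * (d div g) * (e * t) \<in> {x. d dvd x}" using deq by (metis dvd_triv_right mem_Collect_eq)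
    qed
    show ?thesis using that[OF _ u v] ab by (simp add: add.commute)
  qed
  then show "\<one>\<^bsub>\<Z>\<^esub> \<in> set_add \<Z> (ideal_res \<Z> I J) (ideal_res \<Z> J I)"
    unfolding set_add_def' by blast
qed

lemma int_BLD: "BLD \<Z>"
  unfolding BLD_def
proof (intro allI impI subsetI)
  fix I J x assume I: "ideal I \<Z>" and J: "ideal J \<Z>" and x: "x \<in> I \<inter> J"
  obtain d where d: "I = {x. d dvd x}" using int_ideal_principal[OF I] by blast
  obtain e where e: "J = {x. e dvd x}" using int_ideal_principal[OF J] by blast
  define g where "g = gcd d e"
  show "x \<in> ideal_prod \<Z> I (ideal_res \<Z> I J)"
  proof (cases "g = 0")
    case True
    then have "d = 0" "e = 0" unfolding g_def by auto
    then have "x = 0" "0 \<in> I" "0 \<in> ideal_res \<Z> I J" using x unfolding d e ideal_res_def by auto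
    then show ?thesis using ideal_prod.prod[of 0 I 0 "ideal_res \<Z> I J" \<Z>] by simp
  next
    case False
    have gd: "g dvd d" and ge: "g dvd e" unfolding g_def by auto
    have cop0: "coprime (d div g) (e div g)" using False unfolding g_def by (simp add: div_gcd_coprime)
    then have cop: "coprime (e div g) (d div g)" by (simp add: coprime_commute)
    have deq: "d = g * (d div g)" and eeq: "e = g * (e div g)" using gd ge by auto
    obtain k where k: "x = d * k" using x unfolding d by auto
    have "e dvd d * k" using x k unfolding e by auto
    then have "g * (e div g) dvd g * ((d div g) * k)" using deq eeq by (metis mult.assoc)
    then have "(e div g) dvd (d div g) * k" using False by simp
    then have "(e div g) dvd k" using cop by (simp add: coprime_dvd_mult_right_iff)
    then obtain m where m: "k = (e div g) * m" by auto
    have dI: "d \<in> I" unfolding d by auto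
    have r: "(e div g) * m \<in> ideal_res \<Z> I J" unfolding d e
    proof (rule int_res_mem)
      fix t
      have "(e div g) * m * (d * t) = ((d div g) * m * t) * (g * (e div g))"
        by (subst deq) (simp add: algebra_simps)
      then show "(e div g) * m * (d * t) \<in> {x. e dvd x}" using eeq by (metis dvd_triv_right mem_Collect_eq)
    qed
    show ?thesis using ideal_prod.prod[OF dI r, of \<Z>] k m by simp
  qed
qed



lemma pair_hom:
  assumes "f \<in> ring_hom R S" "g \<in> ring_hom R T"
  shows "(\<lambda>x. (f x, g x)) \<in> ring_hom R (RDirProd S T)"
  using assms unfolding ring_hom_def RDirProd_def DirProd_def by (auto simp: monoid.defs)

lemma mod_hom:
  assumes "(m::int) > 1"
  shows "(\<lambda>n. n mod m) \<in> ring_hom \<Z> (residue_ring m)"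
  using assms unfolding ring_hom_def residue_ring_def
  by (auto simp: mod_add_eq mod_mult_eq)

lemma nil_hom: "(\<lambda>n. []) \<in> ring_hom R nil_ring"
  unfolding ring_hom_def by (auto simp: monoid.defs)

lemma list_hom:
  assumes "\<forall>m\<in>set ms. (m::int) > 1"
  shows "(\<lambda>n. map (\<lambda>m. n mod m) ms) \<in> ring_hom \<Z> (RDirProd_list (map residue_ring ms))"
  using assms
proof (induct ms)
  case Nil then show ?case using nil_hom by simp
next
  case (Cons m ms)
  have h: "(\<lambda>n. (n mod m, map (\<lambda>m. n mod m) ms)) \<in> ring_hom \<Z> (RDirProd (residue_ring m) (RDirProd_list (map residue_ring ms)))"
    using Cons by (intro pair_hom mod_hom) auto
  have "(\<lambda>(a, as). a # as) \<circ> (\<lambda>n. (n mod m, map (\<lambda>m. n mod m) ms)) \<in> ring_hom \<Z> (RDirProd_list (residue_ring m # map residue_ring ms))"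
    by (rule ring_hom_trans[OF h RDirProd_list_hom1])
  moreover have "(\<lambda>(a, as). a # as) \<circ> (\<lambda>n. (n mod m, map (\<lambda>m. n mod m) ms)) = (\<lambda>n. map (\<lambda>m. n mod m) (m # ms))"
    by auto
  ultimately show ?case by simp
qed

lemma list_surj:
  assumes "\<forall>m\<in>set ms. (m::int) > 1" and "sorted_wrt coprime ms"
  shows "(\<lambda>n. map (\<lambda>m. n mod m) ms) ` UNIV = carrier (RDirProd_list (map residue_ring ms))"
proof
  show "(\<lambda>n. map (\<lambda>m. n mod m) ms) ` UNIV \<subseteq> carrier (RDirProd_list (map residue_ring ms))"
    using ring_hom_closed[OF list_hom[OF assms(1)]] by auto
  show "carrier (RDirProd_list (map residue_ring ms)) \<subseteq> (\<lambda>n. map (\<lambda>m. n mod m) ms) ` UNIV"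
    using assms
  proof (induct ms)
    case Nil then show ?case by simp
  next
    case (Cons m ms)
    show ?case
    proof
      fix z assume "z \<in> carrier (RDirProd_list (map residue_ring (m # ms)))"
      then obtain x xs where z: "z = x # xs" and x: "x \<in> {0..m-1}"
        and xs: "xs \<in> carrier (RDirProd_list (map residue_ring ms))"
        using RDirProd_list_carrier[of "residue_ring m" "map residue_ring ms"]
        by (auto simp: residue_ring_def)
      obtain n0 where n0: "xs = map (\<lambda>m. n0 mod m) ms" using Cons xs by auto
      have "coprime m (prod_list ms)" using Cons(3) by (auto intro: prod_list_coprime_right)
      then obtain n where n: "[n = x] (mod m)" "[n = n0] (mod prod_list ms)"
        using binary_chinese_remainder_int by blast
      have "n mod m = x" using n(1) x unfolding cong_def by auto
      moreover have "n mod m' = n0 mod m'" if "m' \<in> set ms" for m'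
        using cong_dvd_modulus[OF n(2) prod_list_dvd[OF that]] unfolding cong_def .
      ultimately have "z = map (\<lambda>m. n mod m) (m # ms)" using z n0 by simp
      then show "z \<in> (\<lambda>n. map (\<lambda>m. n mod m) (m # ms)) ` UNIV" by blast
    qed
  qed
qed



lemma moduli_props:
  assumes "distinct (map fst ps)" and "\<forall>(p, a) \<in> set ps. prime p \<and> a > 0"
  shows "\<forall>m\<in>set (map (\<lambda>(p, a). int (p ^ a)) ps). m > 1"
    and "sorted_wrt coprime (map (\<lambda>(p, a). int (p ^ a)) ps)"
proof -
  show "\<forall>m\<in>set (map (\<lambda>(p, a). int (p ^ a)) ps). m > 1"
  proof
    fix m assume "m \<in> set (map (\<lambda>(p, a). int (p ^ a)) ps)"
    then obtain p a where pa: "(p, a) \<in> set ps" "m = int (p ^ a)" by auto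
    then have "prime p" "a > 0" using assms(2) by auto
    then have "1 < p ^ a" using prime_gt_1_nat one_less_power by blast
    then have "int 1 < int (p ^ a)" by (simp only: of_nat_less_iff)
    then show "m > 1" using pa by simp
  qed
  show "sorted_wrt coprime (map (\<lambda>(p, a). int (p ^ a)) ps)"
    using assms
  proof (induct ps)
    case Nil then show ?case by simp
  next
    case (Cons pa ps)
    obtain p a where pa: "pa = (p, a)" by fastforce
    have p: "prime p" "a > 0" using Cons(3) pa by auto
    have "coprime (int (p ^ a)) (int (q ^ b))" if "(q, b) \<in> set ps" for q b
    proof -
      have "q \<noteq> p" using Cons(2) pa that by force
      moreover have "prime q" "b > 0" using Cons(3) that by auto
      ultimately have "coprime p q" using p primes_coprime by blast
      then have "coprime (p ^ a) (q ^ b)" by simp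
      then show ?thesis by simp
    qed
    moreover have "sorted_wrt coprime (map (\<lambda>(p, a). int (p ^ a)) ps)" using Cons by auto
    ultimately show ?case using pa by auto
  qed
qed

theorem corollary3p9:
  fixes ps :: "(nat \<times> nat) list"
  assumes "ps \<noteq> []"
    and "distinct (map fst ps)"
    and "\<forall>(p, a) \<in> set ps. prime p \<and> a > 0"
  shows "BL_ring (RDirProd_list (map (\<lambda>(p, a). residue_ring (int (p ^ a))) ps))"
proof -
  define ms where "ms = map (\<lambda>(p, a). int (p ^ a)) ps"
  have eq: "map (\<lambda>(p, a). residue_ring (int (p ^ a))) ps = map residue_ring ms"
    unfolding ms_def by (induct ps) auto
  have gt: "\<forall>m\<in>set ms. m > 1" and cop: "sorted_wrt coprime ms"
    using moduli_props[OF assms(2,3)] unfolding ms_def by auto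
  have ring: "ring (RDirProd_list (map residue_ring ms))"
  proof (rule RDirProd_list_is_ring)
    fix i assume "i < length (map residue_ring ms)"
    then have "ms ! i \<in> set ms" by simp
    then have "residues (ms ! i)" using gt by (simp add: residues_def)
    then have "cring (residue_ring (ms ! i))" by (rule residues.cring)
    then show "ring (map residue_ring ms ! i)" using \<open>i < _\<close> by (simp add: cring.axioms(1))
  qed
  have hom: "(\<lambda>n. map (\<lambda>m. n mod m) ms) \<in> ring_hom \<Z> (RDirProd_list (map residue_ring ms))"
    by (rule list_hom[OF gt])
  have surj: "(\<lambda>n. map (\<lambda>m. n mod m) ms) ` carrier \<Z> = carrier (RDirProd_list (map residue_ring ms))"
    using list_surj[OF gt cop] by simp
  note H = hom_BL[OF int_is_cring ring hom surj int_BLD int_BLP]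
  have "BL_ring (RDirProd_list (map residue_ring ms))"
    by (rule cring.BL_ringI[OF H])
  then show ?thesis unfolding eq .
qed

end
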